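(* Let $\gamma:[0,l]\times[0,w)\to E_1^4$, $(s,t)\mapsto\gamma(s,t)$, be a smooth inextensible one-parameter family of partially null curves in $E_1^4$ parametrized by arclength ($\|\partial\gamma/\partial s\|\equiv1$), with Frenet frame $\{T,N,B_1,B_2\}$, curvatures $k_1,k_2$ (and $k_3\equiv0$), and write $$\frac{\partial\gamma}{\partial t}=\beta_1T+\beta_2N+\beta_3B_1+\beta_4B_2$$ with smooth scalar functions $\beta_i$. Put $\psi_1=\langle\frac{\partial N}{\partial t},B_1\rangle$ and $\psi_3=\langle\frac{\partial B_1}{\partial t},B_2\rangle$. Then, at points where $\frac{\partial\beta_4}{\partial s}\neq0$, $$k_1=-\frac{\partial\psi_1/\partial s}{\partial\beta_4/\partial s},$$ and at points where $\psi_1\neq0$, $$k_2=\frac{1}{\psi_1}\frac{\partial\psi_3}{\partial s}.$$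
   Context: $E_1^4$ is $\mathbb{R}^4$ with the Lorentzian metric $\langle x,y\rangle=-x_1y_1+x_2y_2+x_3y_3+x_4y_4$ and $\|x\|=\sqrt{|\langle x,x\rangle|}$. A partially null curve is a spacelike curve whose first binormal is a null vector. For such a curve parametrized by arclength $s$, its Frenet frame $\{T,N,B_1,B_2\}$ ($T=\partial\gamma/\partial s$) satisfies $\langle T,T\rangle=\langle N,N\rangle=1$, $\langle B_1,B_1\rangle=\langle B_2,B_2\rangle=0$, $\langle B_1,B_2\rangle=1$, all other inner products zero, and the Frenet equations $T'=k_1N$, $N'=-k_1T+k_2B_1$, $B_1'=k_3B_1$, $B_2'=-k_2N-k_3B_2$, with $k_3\equiv0$. In the family, each $s\mapsto\gamma(s,t)$ is such a curve and frame and curvatures are smooth in $(s,t)$. The flow is inextensible if $\frac{\partial}{\partial t}\|\partial\gamma/\partial u\|=0$. *)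

theory Defs
  imports "HOL-Analysis.Analysis"
begin

definition lor :: "real^4 \<Rightarrow> real^4 \<Rightarrow> real" where
  "lor x y = - x$1 * y$1 + x$2 * y$2 + x$3 * y$3 + x$4 * y$4"

definition lnorm :: "real^4 \<Rightarrow> real" where
  "lnorm x = sqrt \<bar>lor x x\<bar>"

definition pd_s :: "(real \<times> real \<Rightarrow> 'a::real_normed_vector) \<Rightarrow> real \<times> real \<Rightarrow> 'a" where
  "pd_s F p = vector_derivative (\<lambda>s. F (s, snd p)) (at (fst p))"

definition pd_t :: "(real \<times> real \<Rightarrow> 'a::real_normed_vector) \<Rightarrow> real \<times> real \<Rightarrow> 'a" where
  "pd_t F p = vector_derivative (\<lambda>t. F (fst p, t)) (at (snd p))"

fun Ck_on :: "nat \<Rightarrow> (real \<times> real) set \<Rightarrow> (real \<times> real \<Rightarrow> 'a::real_normed_vector) \<Rightarrow> bool" where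
  "Ck_on 0 U F = continuous_on U F"
| "Ck_on (Suc k) U F =
     (continuous_on U F \<and>
      (\<forall>p\<in>U. (\<lambda>s. F (s, snd p)) differentiable (at (fst p)) \<and>
              (\<lambda>t. F (fst p, t)) differentiable (at (snd p))) \<and>
      Ck_on k U (pd_s F) \<and> Ck_on k U (pd_t F))"

definition smooth_on :: "(real \<times> real) set \<Rightarrow> (real \<times> real \<Rightarrow> 'a::real_normed_vector) \<Rightarrow> bool" where
  "smooth_on U F \<longleftrightarrow> open U \<and> (\<forall>k. Ck_on k U F)"

end

theory Submission imports Defs begin

lemma Ck_Suc_imp: "Ck_on (Suc k) U F \<Longrightarrow> Ck_on k U F"
proof (induction k arbitrary: F)
  case 0 then show ?case by simp
next
  case (Suc k)
  have a: "continuous_on U F" "Ck_on (Suc k) U (pd_s F)" "Ck_on (Suc k) U (pd_t F)"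
     "\<forall>p\<in>U. (\<lambda>s. F (s, snd p)) differentiable (at (fst p)) \<and>
              (\<lambda>t. F (fst p, t)) differentiable (at (snd p))"
    using Suc.prems by (subst (asm) Ck_on.simps(2), blast)+
  show ?case unfolding Ck_on.simps(2)[of k] using a Suc.IH by blast
qed

lemma smooth_pd:
  assumes "smooth_on U F" shows "smooth_on U (pd_s F)" "smooth_on U (pd_t F)"
proof -
  have o: "open U" and c: "\<And>k. Ck_on (Suc k) U F" using assms unfolding smooth_on_def by blast+
  have "Ck_on k U (pd_s F) \<and> Ck_on k U (pd_t F)" for k
    using c[of k] by (subst (asm) Ck_on.simps(2)) blast
  then show "smooth_on U (pd_s F)" "smooth_on U (pd_t F)" using o unfolding smooth_on_def by blast+
qed

lemma smooth_cont: "smooth_on U F \<Longrightarrow> continuous_on U F"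
  unfolding smooth_on_def using Ck_on.simps(1) by blast

lemma smooth_diff:
  assumes "smooth_on U F" "p \<in> U"
  shows "(\<lambda>s. F (s, snd p)) differentiable (at (fst p))" "(\<lambda>t. F (fst p, t)) differentiable (at (snd p))"
proof -
  have "Ck_on (Suc 0) U F" using assms unfolding smooth_on_def by blast
  then have "\<forall>p\<in>U. (\<lambda>s. F (s, snd p)) differentiable (at (fst p)) \<and>
              (\<lambda>t. F (fst p, t)) differentiable (at (snd p))"
    by (subst (asm) Ck_on.simps(2)) blast
  then show "(\<lambda>s. F (s, snd p)) differentiable (at (fst p))" "(\<lambda>t. F (fst p, t)) differentiable (at (snd p))"
    using assms(2) by blast+
qed

lemma smooth_ds:
  assumes "smooth_on U F" "(s,t) \<in> U"
  shows "((\<lambda>s. F (s, t)) has_vector_derivative pd_s F (s,t)) (at s)"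
  using smooth_diff(1)[OF assms] unfolding pd_s_def by (simp add: vector_derivative_works)

lemma smooth_dt:
  assumes "smooth_on U F" "(s,t) \<in> U"
  shows "((\<lambda>t. F (s, t)) has_vector_derivative pd_t F (s,t)) (at t)"
  using smooth_diff(2)[OF assms] unfolding pd_t_def by (simp add: vector_derivative_works)

lemma cont_slice_s:
  assumes "continuous_on U G" "\<And>\<sigma>. \<sigma> \<in> S \<Longrightarrow> (\<sigma>,t) \<in> U"
  shows "continuous_on S (\<lambda>\<sigma>. G (\<sigma>,t))"
proof -
  have "continuous_on S (\<lambda>\<sigma>. (\<sigma>,t))" by (intro continuous_intros)
  moreover have "(\<lambda>\<sigma>. (\<sigma>,t)) ` S \<subseteq> U" using assms(2) by auto
  ultimately show ?thesis by (rule continuous_on_compose2[OF assms(1)])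
qed

lemma cont_swap:
  assumes "continuous_on U G" "\<And>t \<sigma>. (t,\<sigma>) \<in> S \<Longrightarrow> (\<sigma>,t) \<in> U"
  shows "continuous_on S (\<lambda>(t,\<sigma>). G (\<sigma>,t))"
proof -
  have "continuous_on S (\<lambda>x. (snd x, fst x))" by (intro continuous_intros)
  moreover have "(\<lambda>x. (snd x, fst x)) ` S \<subseteq> U" using assms(2) by auto
  ultimately have "continuous_on S (\<lambda>x. G (snd x, fst x))"
    by (rule continuous_on_compose2[OF assms(1)])
  then show ?thesis by (simp add: case_prod_unfold)
qed

lemma clairaut:
  fixes F :: "real \<times> real \<Rightarrow> 'a::banach"
  assumes sm: "smooth_on U F" and p: "(s0,t0) \<in> U"
  shows "pd_s (pd_t F) (s0,t0) = pd_t (pd_s F) (s0,t0)"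
proof -
  have oU: "open U" using sm unfolding smooth_on_def by blast
  obtain e where e: "e > 0" "ball (s0,t0) e \<subseteq> U" using oU p open_contains_ball by blast
  define d where "d = e/4"
  have d: "d > 0" using e d_def by simp
  define a where "a = s0 - d"
  define b where "b = s0 + d"
  define J where "J = {t0-d<..<t0+d}"
  have inU: "(\<sigma>,t) \<in> U" if "\<sigma> \<in> {a..b}" "t \<in> J" for \<sigma> t
  proof -
    have "dist \<sigma> s0 < e/2" "dist t t0 < e/2" using that d unfolding a_def b_def J_def d_def dist_real_def by (auto simp: abs_if)
    then have "sqrt ((dist s0 \<sigma>)\<^sup>2 + (dist t0 t)\<^sup>2) < e"
      by (intro sqrt_sum_squares_half_less) (simp_all add: dist_commute)
    then have "dist (s0,t0) (\<sigma>,t) < e" unfolding dist_Pair_Pair .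
    then show ?thesis using e by auto
  qed
  have abJ: "a \<le> b" "t0 \<in> J" "open J" "convex J" "s0 \<in> {a<..<b}" using d unfolding a_def b_def J_def by auto
  note smS = smooth_pd(1)[OF sm]
  note smT = smooth_pd(2)[OF sm]
  note smST = smooth_pd(2)[OF smS]
  have cST: "continuous_on (J \<times> {a..b}) (\<lambda>(t,\<sigma>). pd_t (pd_s F) (\<sigma>,t))"
    by (rule cont_swap[OF smooth_cont[OF smST]]) (auto intro: inU)
  have eq1: "pd_t F (s,t0) = pd_t F (a,t0) + integral {a..s} (\<lambda>\<sigma>. pd_t (pd_s F) (\<sigma>,t0))"
    if s: "s \<in> {a..b}" for s
  proof -
    have I: "integral {a..s} (\<lambda>\<sigma>. pd_s F (\<sigma>,t)) = F (s,t) - F (a,t)" if t: "t \<in> J" for t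
    proof -
      have "((\<lambda>\<sigma>. pd_s F (\<sigma>,t)) has_integral (F (s,t) - F (a,t))) {a..s}"
        apply (rule fundamental_theorem_of_calculus)
        using s apply simp
        apply (rule has_vector_derivative_at_within)
        apply (rule smooth_ds[OF sm])
        apply (rule inU)
        using s t by auto
      then show ?thesis by (rule integral_unique)
    qed
    have L: "((\<lambda>t. integral (cbox a s) (\<lambda>\<sigma>. pd_s F (\<sigma>,t))) has_vector_derivative
              integral (cbox a s) (\<lambda>\<sigma>. pd_t (pd_s F) (\<sigma>,t0))) (at t0 within J)"
    proof (rule leibniz_rule_vector_derivative[where f="\<lambda>t \<sigma>. pd_s F (\<sigma>,t)" and fx="\<lambda>t \<sigma>. pd_t (pd_s F) (\<sigma>,t)"])
      fix t \<sigma> assume t\<sigma>: "t \<in> J" "\<sigma> \<in> cbox a s"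
      show "((\<lambda>t. pd_s F (\<sigma>, t)) has_vector_derivative pd_t (pd_s F) (\<sigma>, t)) (at t within J)"
        apply (rule has_vector_derivative_at_within)
        apply (rule smooth_dt[OF smS])
        apply (rule inU)
        using t\<sigma> s by (auto simp: cbox_interval)
    next
      fix t assume "t \<in> J"
      have "continuous_on {a..s} (\<lambda>\<sigma>. pd_s F (\<sigma>,t))"
        using s \<open>t \<in> J\<close> inU by (intro cont_slice_s[OF smooth_cont[OF smS]]) simp
      then show "(\<lambda>\<sigma>. pd_s F (\<sigma>,t)) integrable_on cbox a s"
        by (simp add: integrable_continuous_real)
    next
      show "continuous_on (J \<times> cbox a s) (\<lambda>(t,\<sigma>). pd_t (pd_s F) (\<sigma>,t))"
        by (rule continuous_on_subset[OF cST]) (use s in auto)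
    qed (use abJ in auto)
    then have L0: "((\<lambda>t. integral {a..s} (\<lambda>\<sigma>. pd_s F (\<sigma>,t))) has_vector_derivative
              integral {a..s} (\<lambda>\<sigma>. pd_t (pd_s F) (\<sigma>,t0))) (at t0)"
      by (simp only: cbox_interval at_within_open[OF abJ(2) abJ(3)])
    have L': "((\<lambda>t. F (s,t) - F (a,t)) has_vector_derivative
              integral {a..s} (\<lambda>\<sigma>. pd_t (pd_s F) (\<sigma>,t0))) (at t0)"
      by (rule has_vector_derivative_transform_within_open[OF L0 abJ(3) abJ(2)]) (simp add: I)
    have "((\<lambda>t. F (s,t) - F (a,t)) has_vector_derivative pd_t F (s,t0) - pd_t F (a,t0)) (at t0)"
      using s abJ inU by (intro has_vector_derivative_diff smooth_dt[OF sm]) auto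
    from vector_derivative_unique_at[OF this L'] show ?thesis by (metis add.commute diff_add_cancel)
  qed
  have sab: "s0 \<in> {a..b}" using abJ(5) by auto
  have cg: "continuous_on {a..b} (\<lambda>\<sigma>. pd_t (pd_s F) (\<sigma>,t0))"
    by (rule cont_slice_s[OF smooth_cont[OF smST]]) (rule inU, assumption, rule abJ(2))
  have "((\<lambda>u. integral {a..u} (\<lambda>\<sigma>. pd_t (pd_s F) (\<sigma>,t0))) has_vector_derivative pd_t (pd_s F) (s0,t0)) (at s0 within {a..b})"
    by (rule integral_has_vector_derivative[OF cg sab])
  then have "((\<lambda>u. integral {a..u} (\<lambda>\<sigma>. pd_t (pd_s F) (\<sigma>,t0))) has_vector_derivative pd_t (pd_s F) (s0,t0)) (at s0 within {a<..<b})"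
    by (rule has_vector_derivative_within_subset) (rule greaterThanLessThan_subseteq_atLeastAtMost_iff[THEN iffD2], simp)
  then have Dint: "((\<lambda>u. integral {a..u} (\<lambda>\<sigma>. pd_t (pd_s F) (\<sigma>,t0))) has_vector_derivative pd_t (pd_s F) (s0,t0)) (at s0)"
    by (simp only: at_within_open[OF abJ(5) open_greaterThanLessThan])
  have "((\<lambda>u. pd_t F (a,t0) + integral {a..u} (\<lambda>\<sigma>. pd_t (pd_s F) (\<sigma>,t0))) has_vector_derivative pd_t (pd_s F) (s0,t0)) (at s0)"
    using has_vector_derivative_add[OF has_vector_derivative_const Dint] by (simp only: add_0)
  then have D1: "((\<lambda>u. pd_t F (u,t0)) has_vector_derivative pd_t (pd_s F) (s0,t0)) (at s0)"
  proof (rule has_vector_derivative_transform_within_open[OF _ open_greaterThanLessThan abJ(5)])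
    fix y :: real assume "y \<in> {a<..<b}"
    then have "y \<in> {a..b}" by simp
    from eq1[OF this] show "pd_t F (a,t0) + integral {a..y} (\<lambda>\<sigma>. pd_t (pd_s F) (\<sigma>,t0)) = pd_t F (y,t0)" by (rule sym)
  qed
  have D2: "((\<lambda>u. pd_t F (u,t0)) has_vector_derivative pd_s (pd_t F) (s0,t0)) (at s0)"
    by (rule smooth_ds[OF smT p])
  show ?thesis using vector_derivative_unique_at[OF D2 D1] .
qed


lemma agree:
  fixes f g :: "real \<Rightarrow> 'a::real_normed_vector"
  assumes ab: "a < b" "x \<in> {a..b}"
    and f: "(f has_vector_derivative f') (at x)" and g: "(g has_vector_derivative g') (at x)"
    and eq: "\<And>y. y \<in> {a..b} \<Longrightarrow> f y = g y"
  shows "f' = g'"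
proof -
  have "(g has_vector_derivative f') (at x within {a..b})"
    by (rule has_vector_derivative_transform[OF ab(2) _ has_vector_derivative_at_within[OF f]]) (simp add: eq)
  moreover have "(g has_vector_derivative g') (at x within {a..b})"
    by (rule has_vector_derivative_at_within[OF g])
  ultimately show ?thesis
    using vector_derivative_unique_within_closed_interval[of a b x g f' g'] ab by (simp add: cbox_interval)
qed

lemma lor_add1: "lor (x + y) z = lor x z + lor y z" unfolding lor_def by (simp add: algebra_simps)
lemma lor_add2: "lor z (x + y) = lor z x + lor z y" unfolding lor_def by (simp add: algebra_simps)
lemma lor_diff1: "lor (x - y) z = lor x z - lor y z" unfolding lor_def by (simp add: algebra_simps)
lemma lor_diff2: "lor z (x - y) = lor z x - lor z y" unfolding lor_def by (simp add: algebra_simps)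
lemma lor_minus1: "lor (- x) z = - lor x z" unfolding lor_def by (simp add: algebra_simps)
lemma lor_minus2: "lor z (- x) = - lor z x" unfolding lor_def by (simp add: algebra_simps)
lemma lor_scale1: "lor (r *\<^sub>R x) z = r * lor x z" unfolding lor_def by (simp add: algebra_simps)
lemma lor_scale2: "lor z (r *\<^sub>R x) = r * lor z x" unfolding lor_def by (simp add: algebra_simps)
lemma lor_zero1: "lor 0 z = 0" unfolding lor_def by simp
lemma lor_zero2: "lor z 0 = 0" unfolding lor_def by simp
lemma lor_comm: "lor x y = lor y x" unfolding lor_def by (simp add: algebra_simps)

lemmas lor_lin = lor_add1 lor_add2 lor_diff1 lor_diff2 lor_minus1 lor_minus2 lor_scale1 lor_scale2 lor_zero1 lor_zero2

lemma lor_deriv: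
  assumes f: "(f has_vector_derivative f') (at x within S)" and g: "(g has_vector_derivative g') (at x within S)"
  shows "((\<lambda>x. lor (f x) (g x)) has_vector_derivative (lor f' (g x) + lor (f x) g')) (at x within S)"
proof -
  have c: "((\<lambda>x. f x $ i * g x $ i) has_vector_derivative (f x $ i * g' $ i + f' $ i * g x $ i)) (at x within S)" for i
    by (rule has_vector_derivative_mult[OF bounded_linear.has_vector_derivative[OF bounded_linear_vec_nth f]
          bounded_linear.has_vector_derivative[OF bounded_linear_vec_nth g]])
  have "((\<lambda>x. - (f x $ 1 * g x $ 1) + f x $ 2 * g x $ 2 + f x $ 3 * g x $ 3 + f x $ 4 * g x $ 4) has_vector_derivative
     (- (f x $ 1 * g' $ 1 + f' $ 1 * g x $ 1) + (f x $ 2 * g' $ 2 + f' $ 2 * g x $ 2) + (f x $ 3 * g' $ 3 + f' $ 3 * g x $ 3) + (f x $ 4 * g' $ 4 + f' $ 4 * g x $ 4))) (at x within S)"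
    by (intro has_vector_derivative_add has_vector_derivative_minus c)
  then show ?thesis unfolding lor_def by (simp add: algebra_simps)
qed

theorem theorem3p8:
  fixes l w :: real
    and \<gamma> T N B1 B2 :: "real \<times> real \<Rightarrow> real^4"
    and k1 k2 k3 \<beta>1 \<beta>2 \<beta>3 \<beta>4 :: "real \<times> real \<Rightarrow> real"
    and U :: "(real \<times> real) set"
  defines "D \<equiv> {0..l} \<times> {0..<w}"
  assumes lw: "0 < l" "0 < w"
    and U: "open U" "D \<subseteq> U"
    and smooth: "smooth_on U \<gamma>" "smooth_on U T" "smooth_on U N" "smooth_on U B1" "smooth_on U B2"
      "smooth_on U k1" "smooth_on U k2" "smooth_on U k3"
      "smooth_on U \<beta>1" "smooth_on U \<beta>2" "smooth_on U \<beta>3" "smooth_on U \<beta>4"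
    and arclength: "\<forall>p\<in>D. lnorm (pd_s \<gamma> p) = 1"
    and tangent: "\<forall>p\<in>D. T p = pd_s \<gamma> p"
    and frame: "\<forall>p\<in>D. lor (T p) (T p) = 1 \<and> lor (N p) (N p) = 1 \<and>
                   lor (B1 p) (B1 p) = 0 \<and> lor (B2 p) (B2 p) = 0 \<and> lor (B1 p) (B2 p) = 1 \<and>
                   lor (T p) (N p) = 0 \<and> lor (T p) (B1 p) = 0 \<and> lor (T p) (B2 p) = 0 \<and>
                   lor (N p) (B1 p) = 0 \<and> lor (N p) (B2 p) = 0"
    and frenet: "\<forall>p\<in>D. pd_s T p = k1 p *\<^sub>R N p \<and>
                    pd_s N p = - k1 p *\<^sub>R T p + k2 p *\<^sub>R B1 p \<and>
                    pd_s B1 p = k3 p *\<^sub>R B1 p \<and>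
                    pd_s B2 p = - k2 p *\<^sub>R N p - k3 p *\<^sub>R B2 p"
    and k3: "\<forall>p\<in>D. k3 p = 0"
    and inextensible: "\<forall>p\<in>D. pd_t (\<lambda>q. lnorm (pd_s \<gamma> q)) p = 0"
    and variation: "\<forall>p\<in>D. pd_t \<gamma> p = \<beta>1 p *\<^sub>R T p + \<beta>2 p *\<^sub>R N p + \<beta>3 p *\<^sub>R B1 p + \<beta>4 p *\<^sub>R B2 p"
  shows "\<forall>p\<in>D.
           (pd_s \<beta>4 p \<noteq> 0 \<longrightarrow>
              k1 p = - pd_s (\<lambda>q. lor (pd_t N q) (B1 q)) p / pd_s \<beta>4 p) \<and>
           (lor (pd_t N p) (B1 p) \<noteq> 0 \<longrightarrow>
              k2 p = (1 / lor (pd_t N p) (B1 p)) * pd_s (\<lambda>q. lor (pd_t B1 q) (B2 q)) p)"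
proof (intro ballI)
  fix p assume pD: "p \<in> D"
  obtain s t where p: "p = (s,t)" by (cases p)
  have sl: "s \<in> {0..l}" and tw: "t \<in> {0..<w}" using pD p unfolding D_def by auto
  have inD: "(s',t') \<in> D" if "s' \<in> {0..l}" "t' \<in> {0..<w}" for s' t' unfolding D_def using that by simp
  define c where "c = (t+w)/2"
  have c: "0 < c" "t \<in> {0..c}" using tw lw unfolding c_def by auto
  have Dt: "(s,t') \<in> D" if "t' \<in> {0..c}" for t'
    using that tw lw sl inD unfolding c_def by auto
  have Ds: "(s',t) \<in> D" if "s' \<in> {0..l}" for s' using that tw inD by blast
  have pD': "(s,t) \<in> D" using pD p by simp
  have pU: "(s,t) \<in> U" using pD' U(2) by blast
  note fr = frame[rule_format]
  note fn = frenet[rule_format]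
  have k3p: "k3 (s,t) = 0" using k3 pD' by blast
  note smpN = smooth_pd(1)[OF smooth(3)]
  note smpB1 = smooth_pd(1)[OF smooth(4)]
  note smpg = smooth_pd(1)[OF smooth(1)]
  note smtN = smooth_pd(2)[OF smooth(3)]
  note smtB1 = smooth_pd(2)[OF smooth(4)]
  note dtT = smooth_dt[OF smooth(2) pU]
  note dtN = smooth_dt[OF smooth(3) pU]
  note dtB1 = smooth_dt[OF smooth(4) pU]
  note dtk1 = smooth_dt[OF smooth(6) pU]
  note dtk2 = smooth_dt[OF smooth(7) pU]
  have F1: "lor (pd_t B1 (s,t)) (B1 (s,t)) = 0"
  proof -
    have "lor (pd_t B1 (s,t)) (B1 (s,t)) + lor (B1 (s,t)) (pd_t B1 (s,t)) = 0"
    proof (rule agree[OF c(1) c(2) lor_deriv[OF dtB1 dtB1] has_vector_derivative_const])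
      fix y assume "y \<in> {0..c}"
      then show "lor (B1 (s,y)) (B1 (s,y)) = 0" using fr[OF Dt] by blast
    qed
    then show ?thesis by (simp add: lor_comm[of "B1 (s,t)"])
  qed
  have F2: "lor (pd_t N (s,t)) (B1 (s,t)) + lor (N (s,t)) (pd_t B1 (s,t)) = 0"
  proof (rule agree[OF c(1) c(2) lor_deriv[OF dtN dtB1] has_vector_derivative_const])
    fix y assume "y \<in> {0..c}"
    then show "lor (N (s,y)) (B1 (s,y)) = 0" using fr[OF Dt] by blast
  qed
  have fk1: "((\<lambda>t'. - k1 (s,t')) has_field_derivative - pd_t k1 (s,t)) (at t)"
    unfolding has_real_derivative_iff_has_vector_derivative by (rule has_vector_derivative_minus[OF dtk1])
  have fk2: "((\<lambda>t'. k2 (s,t')) has_field_derivative pd_t k2 (s,t)) (at t)"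
    unfolding has_real_derivative_iff_has_vector_derivative by (rule dtk2)
  have F4: "pd_t (pd_s N) (s,t) = ((- k1 (s,t)) *\<^sub>R pd_t T (s,t) + (- pd_t k1 (s,t)) *\<^sub>R T (s,t)) +
       (k2 (s,t) *\<^sub>R pd_t B1 (s,t) + pd_t k2 (s,t) *\<^sub>R B1 (s,t))"
  proof (rule agree[OF c(1) c(2) smooth_dt[OF smpN pU]])
    show "((\<lambda>t'. (- k1 (s,t')) *\<^sub>R T (s,t') + k2 (s,t') *\<^sub>R B1 (s,t')) has_vector_derivative
       ((- k1 (s,t)) *\<^sub>R pd_t T (s,t) + (- pd_t k1 (s,t)) *\<^sub>R T (s,t)) +
       (k2 (s,t) *\<^sub>R pd_t B1 (s,t) + pd_t k2 (s,t) *\<^sub>R B1 (s,t))) (at t)"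
      by (rule has_vector_derivative_add[OF has_vector_derivative_scaleR[OF fk1 dtT] has_vector_derivative_scaleR[OF fk2 dtB1]])
  next
    fix y assume "y \<in> {0..c}"
    then show "pd_s N (s,y) = (- k1 (s,y)) *\<^sub>R T (s,y) + k2 (s,y) *\<^sub>R B1 (s,y)" using fn[OF Dt] by blast
  qed
  have F5: "pd_t (pd_s B1) (s,t) = 0"
  proof (rule agree[OF c(1) c(2) smooth_dt[OF smpB1 pU] has_vector_derivative_const])
    fix y assume y: "y \<in> {0..c}"
    have "pd_s B1 (s,y) = k3 (s,y) *\<^sub>R B1 (s,y)" using fn[OF Dt[OF y]] by blast
    moreover have "k3 (s,y) = 0" using k3 Dt[OF y] by blast
    ultimately show "pd_s B1 (s,y) = 0" by simp
  qed
  have F6: "pd_t T (s,t) = pd_t (pd_s \<gamma>) (s,t)"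
  proof (rule agree[OF c(1) c(2) dtT smooth_dt[OF smpg pU]])
    fix y assume y: "y \<in> {0..c}"
    show "T (s,y) = pd_s \<gamma> (s,y)" using tangent Dt[OF y] by blast
  qed
  note dsT = smooth_ds[OF smooth(2) pU]
  note dsN = smooth_ds[OF smooth(3) pU]
  note dsB1 = smooth_ds[OF smooth(4) pU]
  note dsB2 = smooth_ds[OF smooth(5) pU]
  have fb: "((\<lambda>s'. \<beta> (s',t)) has_field_derivative pd_s \<beta> (s,t)) (at s)" if "smooth_on U \<beta>" for \<beta>
    unfolding has_real_derivative_iff_has_vector_derivative by (rule smooth_ds[OF that pU])
  have F7: "pd_s (pd_t \<gamma>) (s,t) =
     ((((\<beta>1 (s,t) *\<^sub>R pd_s T (s,t) + pd_s \<beta>1 (s,t) *\<^sub>R T (s,t)) +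
       (\<beta>2 (s,t) *\<^sub>R pd_s N (s,t) + pd_s \<beta>2 (s,t) *\<^sub>R N (s,t))) +
       (\<beta>3 (s,t) *\<^sub>R pd_s B1 (s,t) + pd_s \<beta>3 (s,t) *\<^sub>R B1 (s,t))) +
       (\<beta>4 (s,t) *\<^sub>R pd_s B2 (s,t) + pd_s \<beta>4 (s,t) *\<^sub>R B2 (s,t)))"
  proof (rule agree[OF lw(1) sl smooth_ds[OF smooth_pd(2)[OF smooth(1)] pU]])
    show "((\<lambda>s'. \<beta>1 (s',t) *\<^sub>R T (s',t) + \<beta>2 (s',t) *\<^sub>R N (s',t) + \<beta>3 (s',t) *\<^sub>R B1 (s',t) + \<beta>4 (s',t) *\<^sub>R B2 (s',t))
      has_vector_derivative
     ((((\<beta>1 (s,t) *\<^sub>R pd_s T (s,t) + pd_s \<beta>1 (s,t) *\<^sub>R T (s,t)) +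
       (\<beta>2 (s,t) *\<^sub>R pd_s N (s,t) + pd_s \<beta>2 (s,t) *\<^sub>R N (s,t))) +
       (\<beta>3 (s,t) *\<^sub>R pd_s B1 (s,t) + pd_s \<beta>3 (s,t) *\<^sub>R B1 (s,t))) +
       (\<beta>4 (s,t) *\<^sub>R pd_s B2 (s,t) + pd_s \<beta>4 (s,t) *\<^sub>R B2 (s,t)))) (at s)"
      by (intro has_vector_derivative_add has_vector_derivative_scaleR[OF fb[OF smooth(9)] dsT]
          has_vector_derivative_scaleR[OF fb[OF smooth(10)] dsN]
          has_vector_derivative_scaleR[OF fb[OF smooth(11)] dsB1]
          has_vector_derivative_scaleR[OF fb[OF smooth(12)] dsB2])
  next
    fix y assume y: "y \<in> {0..l}"
    show "pd_t \<gamma> (y,t) = \<beta>1 (y,t) *\<^sub>R T (y,t) + \<beta>2 (y,t) *\<^sub>R N (y,t) + \<beta>3 (y,t) *\<^sub>R B1 (y,t) + \<beta>4 (y,t) *\<^sub>R B2 (y,t)"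
      using variation Ds[OF y] by blast
  qed
  have Clg: "pd_s (pd_t \<gamma>) (s,t) = pd_t (pd_s \<gamma>) (s,t)" by (rule clairaut[OF smooth(1) pU])
  have ClN: "pd_s (pd_t N) (s,t) = pd_t (pd_s N) (s,t)" by (rule clairaut[OF smooth(3) pU])
  have ClB1: "pd_s (pd_t B1) (s,t) = pd_t (pd_s B1) (s,t)" by (rule clairaut[OF smooth(4) pU])
  obtain fT: "lor (T (s,t)) (T (s,t)) = 1" and fN: "lor (N (s,t)) (N (s,t)) = 1"
    and fB1: "lor (B1 (s,t)) (B1 (s,t)) = 0" and fB2: "lor (B2 (s,t)) (B2 (s,t)) = 0"
    and fB12: "lor (B1 (s,t)) (B2 (s,t)) = 1" and fTN: "lor (T (s,t)) (N (s,t)) = 0"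
    and fTB1: "lor (T (s,t)) (B1 (s,t)) = 0" and fTB2: "lor (T (s,t)) (B2 (s,t)) = 0"
    and fNB1: "lor (N (s,t)) (B1 (s,t)) = 0" and fNB2: "lor (N (s,t)) (B2 (s,t)) = 0"
    using fr[OF pD'] by blast
  obtain eT: "pd_s T (s,t) = k1 (s,t) *\<^sub>R N (s,t)"
    and eN: "pd_s N (s,t) = - k1 (s,t) *\<^sub>R T (s,t) + k2 (s,t) *\<^sub>R B1 (s,t)"
    and eB1: "pd_s B1 (s,t) = k3 (s,t) *\<^sub>R B1 (s,t)"
    and eB2: "pd_s B2 (s,t) = - k2 (s,t) *\<^sub>R N (s,t) - k3 (s,t) *\<^sub>R B2 (s,t)"
    using fn[OF pD'] by blast
  have fB1T: "lor (B1 (s,t)) (T (s,t)) = 0" using fTB1 lor_comm by metis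
  have fB1N: "lor (B1 (s,t)) (N (s,t)) = 0" using fNB1 lor_comm by metis
  have fB21: "lor (B2 (s,t)) (B1 (s,t)) = 1" using fB12 lor_comm by metis
  have LTB: "lor (pd_t T (s,t)) (B1 (s,t)) = pd_s \<beta>4 (s,t)"
    unfolding F6 Clg[symmetric] F7 eT eN eB1 eB2 k3p
    by (simp add: lor_lin fTB1 fNB1 fB1 fB21)
  have P1: "pd_s (\<lambda>q. lor (pd_t N q) (B1 q)) (s,t) = - k1 (s,t) * pd_s \<beta>4 (s,t)"
  proof -
    have "((\<lambda>s'. lor (pd_t N (s',t)) (B1 (s',t))) has_vector_derivative
        lor (pd_s (pd_t N) (s,t)) (B1 (s,t)) + lor (pd_t N (s,t)) (pd_s B1 (s,t))) (at s)"
      by (rule lor_deriv[OF smooth_ds[OF smtN pU] dsB1])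
    then have "pd_s (\<lambda>q. lor (pd_t N q) (B1 q)) (s,t) =
        lor (pd_s (pd_t N) (s,t)) (B1 (s,t)) + lor (pd_t N (s,t)) (pd_s B1 (s,t))"
      unfolding pd_s_def fst_conv snd_conv by (rule vector_derivative_at)
    also have "\<dots> = - k1 (s,t) * pd_s \<beta>4 (s,t)"
      unfolding ClN F4 eB1 k3p
      by (simp add: lor_lin LTB F1 fB1 fTB1)
    finally show ?thesis .
  qed
  have P2: "pd_s (\<lambda>q. lor (pd_t B1 q) (B2 q)) (s,t) = k2 (s,t) * lor (pd_t N (s,t)) (B1 (s,t))"
  proof -
    have "((\<lambda>s'. lor (pd_t B1 (s',t)) (B2 (s',t))) has_vector_derivative
        lor (pd_s (pd_t B1) (s,t)) (B2 (s,t)) + lor (pd_t B1 (s,t)) (pd_s B2 (s,t))) (at s)"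
      by (rule lor_deriv[OF smooth_ds[OF smtB1 pU] dsB2])
    then have "pd_s (\<lambda>q. lor (pd_t B1 q) (B2 q)) (s,t) =
        lor (pd_s (pd_t B1) (s,t)) (B2 (s,t)) + lor (pd_t B1 (s,t)) (pd_s B2 (s,t))"
      unfolding pd_s_def fst_conv snd_conv by (rule vector_derivative_at)
    also have "\<dots> = - k2 (s,t) * lor (pd_t B1 (s,t)) (N (s,t))"
      unfolding ClB1 F5 eB2 k3p
      by (simp add: lor_lin)
    also have "lor (pd_t B1 (s,t)) (N (s,t)) = - lor (pd_t N (s,t)) (B1 (s,t))"
      using F2 lor_comm[of "N (s,t)" "pd_t B1 (s,t)"] by simp
    finally show ?thesis by simp
  qed
  show "(pd_s \<beta>4 p \<noteq> 0 \<longrightarrow>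
              k1 p = - pd_s (\<lambda>q. lor (pd_t N q) (B1 q)) p / pd_s \<beta>4 p) \<and>
           (lor (pd_t N p) (B1 p) \<noteq> 0 \<longrightarrow>
              k2 p = (1 / lor (pd_t N p) (B1 p)) * pd_s (\<lambda>q. lor (pd_t B1 q) (B2 q)) p)"
    unfolding p P1 P2 by (simp add: field_simps)
qed

end
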